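(* Let $a\ge1$, let $f\colon[a,+\infty)\to\mathbb R$ be continuous with $|f(t)|\le c/t^2$ for all $t\ge a$, where $c>0$ is a real constant. Let $y_1,y_2\colon[a,+\infty)\to\mathbb R$ be $\mathbb R$-linearly independent $\mathcal C^2$ solutions of $y''+fy=0$, and put $y=y_1+y_2i$ and $z=y'/y$ (note $y(t)\ne0$ for all $t\ge a$). Then there is a real $D>0$ with $|z(t)|\le Dt^{2c}$ for all $t\ge a$.
   Context: Differentiability at the endpoint $a$ is understood one-sidedly. *)

theory Defs
  imports "HOL-Analysis.Analysis"
begin

end

theory Submission
  imports Defs
begin
lemma decr:
  fixes \<phi> \<phi>' :: "real \<Rightarrow> real"
  assumes d: "\<And>t. t \<ge> a \<Longrightarrow> (\<phi> has_real_derivative \<phi>' t) (at t within {a..})"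
    and n: "\<And>t. t \<ge> a \<Longrightarrow> \<phi>' t \<le> 0" and at: "a \<le> t"
  shows "\<phi> t \<le> \<phi> a"
proof (cases "a = t")
  case True then show ?thesis by simp
next
  case False
  with at have lt: "a < t" by simp
  have c1: "continuous_on {a..} \<phi>"
    by (auto simp: continuous_on_eq_continuous_within intro: DERIV_continuous d)
  have cont: "continuous_on {a..t} \<phi>"
    by (rule continuous_on_subset[OF c1]) auto
  have der: "(\<phi> has_real_derivative \<phi>' x) (at x)" if "a < x" for x
  proof -
    have "(\<phi> has_real_derivative \<phi>' x) (at x within {a<..})"
      by (rule has_field_derivative_subset[OF d]) (use that in auto)
    moreover have "at x within {a<..} = at x" using that by (intro at_within_open) auto
    ultimately show ?thesis by simp
  qed
  obtain l z where z: "a < z" "z < t" "DERIV \<phi> z :> l" "\<phi> t - \<phi> a = (t - a) * l"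
    using MVT[OF lt cont] der real_differentiable_def by blast
  have "l = \<phi>' z" using DERIV_unique[OF z(3) der[OF z(1)]] .
  with n[of z] z have "l \<le> 0" by simp
  with z(4) lt show ?thesis by (smt (verit) mult_nonneg_nonpos)
qed
lemma zero_sol:
  fixes w w' f :: "real \<Rightarrow> real"
  assumes d: "\<And>t. t \<ge> a \<Longrightarrow> (w has_real_derivative w' t) (at t within {a..})"
    and dd: "\<And>t. t \<ge> a \<Longrightarrow> (w' has_real_derivative (- f t * w t)) (at t within {a..})"
    and fb: "\<And>t. t \<ge> a \<Longrightarrow> \<bar>f t\<bar> \<le> K"
    and w0: "w a = 0" and w'0: "w' a = 0" and at: "a \<le> t"
  shows "w t = 0"
proof -
  define L where "L = 1 + \<bar>K\<bar>"
  define \<phi> where "\<phi> = (\<lambda>t. exp (- L * t) * ((w t)^2 + (w' t)^2))"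
  have der: "(\<phi> has_real_derivative exp (- L * s) * (- L * ((w s)^2 + (w' s)^2) + 2 * w s * w' s * (1 - f s))) (at s within {a..})"
    if "s \<ge> a" for s
    unfolding \<phi>_def
    by (rule derivative_eq_intros d dd that refl)+ (simp add: algebra_simps power2_eq_square)
  have np: "exp (- L * s) * (- L * ((w s)^2 + (w' s)^2) + 2 * w s * w' s * (1 - f s)) \<le> 0"
    if "s \<ge> a" for s
  proof -
    have h1: "\<bar>2 * w s * w' s\<bar> \<le> (w s)^2 + (w' s)^2"
      by (smt (verit) abs_mult zero_le_power2 power2_eq_square power2_diff power2_sum abs_le_iff)
    have h2: "\<bar>1 - f s\<bar> \<le> L" using fb[OF that] unfolding L_def by linarith
    have "2 * w s * w' s * (1 - f s) \<le> \<bar>2 * w s * w' s\<bar> * \<bar>1 - f s\<bar>"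
      by (metis abs_ge_self abs_mult)
    also have "\<dots> \<le> ((w s)^2 + (w' s)^2) * L"
      by (rule mult_mono[OF h1 h2]) auto
    finally have "- L * ((w s)^2 + (w' s)^2) + 2 * w s * w' s * (1 - f s) \<le> 0"
      by (simp add: algebra_simps)
    then show ?thesis by (simp add: mult_nonneg_nonpos)
  qed
  have "\<phi> t \<le> \<phi> a" by (rule decr[OF der np at])
  also have "\<phi> a = 0" by (simp add: \<phi>_def w0 w'0)
  finally have "(w t)^2 + (w' t)^2 \<le> 0"
    unfolding \<phi>_def by (simp add: mult_le_0_iff)
  then show ?thesis by (smt (verit) zero_le_power2 power_zero_numeral zero_eq_power2)
qed


lemma amgm: "(s::real) > 0 \<Longrightarrow> 2 * \<bar>x * y\<bar> \<le> x^2 / s + s * y^2"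
proof -
  assume s: "s > 0"
  have "x^2 / s + s * y^2 - 2 * \<bar>x * y\<bar> = (\<bar>x\<bar> - s * \<bar>y\<bar>)^2 / s"
    using s by (simp add: field_simps power2_eq_square abs_mult)
  also have "\<dots> \<ge> 0" using s by simp
  finally show ?thesis by simp
qed

theorem mainTheorem18:
  fixes a c :: real and f y1 y2 y1' y2' :: "real \<Rightarrow> real"
  assumes a_ge: "a \<ge> 1"
    and c_pos: "c > 0"
    and f_cont: "continuous_on {a..} f"
    and f_bound: "\<And>t. t \<ge> a \<Longrightarrow> \<bar>f t\<bar> \<le> c / t\<^sup>2"
    and y1_d: "\<And>t. t \<ge> a \<Longrightarrow> (y1 has_real_derivative y1' t) (at t within {a..})"
    and y1_dd: "\<And>t. t \<ge> a \<Longrightarrow> (y1' has_real_derivative (- f t * y1 t)) (at t within {a..})"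
    and y2_d: "\<And>t. t \<ge> a \<Longrightarrow> (y2 has_real_derivative y2' t) (at t within {a..})"
    and y2_dd: "\<And>t. t \<ge> a \<Longrightarrow> (y2' has_real_derivative (- f t * y2 t)) (at t within {a..})"
    and lin_indep: "\<And>\<alpha> \<beta> :: real. (\<forall>t\<ge>a. \<alpha> * y1 t + \<beta> * y2 t = 0) \<Longrightarrow> \<alpha> = 0 \<and> \<beta> = 0"
  shows "\<exists>D>0. \<forall>t\<ge>a.
           cmod ((complex_of_real (y1' t) + \<i> * complex_of_real (y2' t))
                 / (complex_of_real (y1 t) + \<i> * complex_of_real (y2 t)))
           \<le> D * t powr (2 * c)"
proof -
  have fb1: "\<bar>f t\<bar> \<le> c" if "t \<ge> a" for t
  proof -
    have "t^2 \<ge> 1" using that a_ge by (simp add: one_le_power)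
    then have "c / t^2 \<le> c" using c_pos by (simp add: divide_le_eq)
    then show ?thesis using f_bound[OF that] by linarith
  qed
  define W where "W = (\<lambda>t. y1 t * y2' t - y1' t * y2 t)"
  have Wd: "(W has_real_derivative 0) (at t within {a..})" if "t \<ge> a" for t
    unfolding W_def
    by (rule derivative_eq_intros y1_d y1_dd y2_d y2_dd that refl)+ (simp add: algebra_simps)
  have Wc: "W t = W a" if "t \<ge> a" for t
  proof -
    have "W t \<le> W a" by (rule decr[OF Wd _ that]) auto
    moreover have "- W t \<le> - W a"
      by (rule decr[of a "\<lambda>t. - W t" "\<lambda>_. 0", OF _ _ that])
        (auto intro!: derivative_eq_intros Wd)
    ultimately show ?thesis by simp
  qed
  have comb: "\<alpha> = 0 \<and> \<beta> = 0" if h: "\<alpha> * y1 a + \<beta> * y2 a = 0" "\<alpha> * y1' a + \<beta> * y2' a = 0" for \<alpha> \<beta>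
  proof (rule lin_indep, intro allI impI)
    fix t assume t: "t \<ge> a"
    show "\<alpha> * y1 t + \<beta> * y2 t = 0"
    proof (rule zero_sol[where a = a and w = "\<lambda>t. \<alpha> * y1 t + \<beta> * y2 t" and w' = "\<lambda>t. \<alpha> * y1' t + \<beta> * y2' t" and f = f and K = c, OF _ _ fb1 _ _ t])
      show "((\<lambda>t. \<alpha> * y1 t + \<beta> * y2 t) has_real_derivative \<alpha> * y1' s + \<beta> * y2' s) (at s within {a..})"
        if "s \<ge> a" for s
        by (rule derivative_eq_intros y1_d y2_d that refl)+ (simp add: algebra_simps)
      show "((\<lambda>t. \<alpha> * y1' t + \<beta> * y2' t) has_real_derivative - f s * (\<alpha> * y1 s + \<beta> * y2 s)) (at s within {a..})"
        if "s \<ge> a" for s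
        by (rule derivative_eq_intros y1_dd y2_dd that refl)+ (simp add: algebra_simps)
    qed (use h in auto)
  qed
  have Wa: "W a \<noteq> 0"
  proof
    assume W0: "W a = 0"
    have "y2 a = 0 \<and> - y1 a = 0"
      by (rule comb) (use W0 in \<open>auto simp: W_def algebra_simps\<close>)
    moreover have "y2' a = 0 \<and> - y1' a = 0"
      by (rule comb) (use W0 in \<open>auto simp: W_def algebra_simps\<close>)
    ultimately have "(1::real) = 0 \<and> (0::real) = 0"
      by (intro comb) auto
    then show False by simp
  qed
  have Wt: "W t \<noteq> 0" if "t \<ge> a" for t using Wc[OF that] Wa by simp
  define P where "P = (\<lambda>t. (y1 t)^2 + (y2 t)^2)"
  define Q where "Q = (\<lambda>t. (y1' t)^2 + (y2' t)^2)"
  define R where "R = (\<lambda>t. y1 t * y1' t + y2 t * y2' t)"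
  have lag: "P t * Q t = (W t)^2 + (R t)^2" for t
    by (simp add: P_def Q_def W_def R_def power2_eq_square algebra_simps)
  have PQpos: "P t > 0 \<and> Q t > 0" if "t \<ge> a" for t
  proof -
    have "(W t)^2 > 0" using Wt[OF that] by simp
    then have "P t * Q t > 0" using lag[of t] by (smt (verit) zero_le_power2)
    moreover have "P t \<ge> 0" "Q t \<ge> 0" by (simp_all add: P_def Q_def)
    ultimately show ?thesis by (smt (verit) mult_nonneg_nonpos mult_nonpos_nonneg)
  qed
  define E where "E = (\<lambda>t. Q t + c * P t / t^2)"
  define \<psi> where "\<psi> = (\<lambda>t. E t * exp (- 2 * c * ln t))"
  have \<psi>d: "(\<psi> has_real_derivative exp (- 2 * c * ln s) * (- 2 * f s * R s + 2 * c * R s / s^2 - 2 * c * P s / s^3 - 2 * c / s * E s)) (at s within {a..})"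
    if "s \<ge> a" for s
  proof -
    have s0: "s > 0" using that a_ge by simp
    have Pd: "(P has_real_derivative 2 * R s) (at s within {a..})"
      unfolding P_def
      by (rule derivative_eq_intros y1_d y1_dd y2_d y2_dd that refl)+ (simp add: R_def algebra_simps)
    have Qd: "(Q has_real_derivative - 2 * f s * R s) (at s within {a..})"
      unfolding Q_def
      by (rule derivative_eq_intros y1_d y1_dd y2_d y2_dd that refl)+ (simp add: R_def algebra_simps)
    have id: "((\<lambda>x. 1 / x^2) has_real_derivative - 2 / s^3) (at s within {a..})"
      using s0 by (auto intro!: derivative_eq_intros simp: field_simps power2_eq_square power3_eq_cube)
    have Ed: "(E has_real_derivative (- 2 * f s * R s + 2 * c * R s / s^2 - 2 * c * P s / s^3)) (at s within {a..})"
    proof -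
      have "((\<lambda>x. Q x + c * (P x * (1 / x^2))) has_real_derivative
          (- 2 * f s * R s + c * (2 * R s * (1 / s^2) + (- 2 / s^3) * P s))) (at s within {a..})"
        by (intro DERIV_add DERIV_cmult DERIV_mult Qd Pd id)
      moreover have "(\<lambda>x. Q x + c * (P x * (1 / x^2))) = E" by (simp add: E_def fun_eq_iff)
      ultimately show ?thesis by (simp add: algebra_simps)
    qed
    have xd: "((\<lambda>x. exp (- 2 * c * ln x)) has_real_derivative exp (- 2 * c * ln s) * (- 2 * c / s)) (at s within {a..})"
      using s0 by (auto intro!: derivative_eq_intros)
    show ?thesis
      unfolding \<psi>_def
      by (rule DERIV_cong[OF DERIV_mult[OF Ed xd]]) (simp add: algebra_simps)
  qed
  have \<psi>np: "exp (- 2 * c * ln s) * (- 2 * f s * R s + 2 * c * R s / s^2 - 2 * c * P s / s^3 - 2 * c / s * E s) \<le> 0"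
    if "s \<ge> a" for s
  proof -
    have s0: "s > 0" using that a_ge by simp
    define k where "k = c / s^2 - f s"
    have k: "\<bar>k\<bar> \<le> 2 * c / s^2" using f_bound[OF that] unfolding k_def by (simp add: abs_le_iff)
    have r1: "2 * \<bar>y1 s * y1' s\<bar> \<le> (y1 s)^2 / s + s * (y1' s)^2" by (rule amgm[OF s0])
    have r2: "2 * \<bar>y2 s * y2' s\<bar> \<le> (y2 s)^2 / s + s * (y2' s)^2" by (rule amgm[OF s0])
    have R2: "\<bar>2 * R s\<bar> \<le> P s / s + s * Q s"
    proof -
      have "\<bar>2 * R s\<bar> \<le> 2 * \<bar>y1 s * y1' s\<bar> + 2 * \<bar>y2 s * y2' s\<bar>" unfolding R_def using abs_triangle_ineq[of "y1 s * y1' s" "y2 s * y2' s"] by simp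
      also have "\<dots> \<le> P s / s + s * Q s" using r1 r2 unfolding P_def Q_def by (simp add: add_divide_distrib algebra_simps)
      finally show ?thesis .
    qed
    have "2 * R s * k \<le> \<bar>2 * R s\<bar> * \<bar>k\<bar>" by (metis abs_ge_self abs_mult)
    also have "\<dots> \<le> (P s / s + s * Q s) * (2 * c / s^2)"
      by (rule mult_mono[OF R2 k]) (use R2 in auto)
    also have "\<dots> = 2 * c * P s / s^3 + 2 * c * Q s / s"
      using s0 by (simp add: field_simps power2_eq_square power3_eq_cube)
    finally have i1: "2 * R s * k \<le> 2 * c * P s / s^3 + 2 * c * Q s / s" .
    have e1: "- 2 * f s * R s + 2 * c * R s / s^2 = 2 * R s * k" by (simp add: k_def algebra_simps)
    have e2: "2 * c / s * E s = 2 * c * Q s / s + 2 * c * (c * P s / s^2) / s" using s0 by (simp add: E_def field_simps)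
    have "c * P s / s^2 \<ge> 0" using c_pos PQpos[OF that] by simp
    then have "2 * c * (c * P s / s^2) / s \<ge> 0" using c_pos s0 PQpos[OF that] by (intro divide_nonneg_pos mult_nonneg_nonneg) auto
    then have "- 2 * f s * R s + 2 * c * R s / s^2 - 2 * c * P s / s^3 - 2 * c / s * E s \<le> 0"
      using i1 e1 e2 by linarith
    then show ?thesis by (simp add: mult_nonneg_nonpos)
  qed
  define M where "M = \<psi> a"
  have Ebound: "E t \<le> M * t powr (2 * c)" if "t \<ge> a" for t
  proof -
    have t0: "t > 0" using that a_ge by simp
    have "\<psi> t \<le> M" unfolding M_def by (rule decr[OF \<psi>d \<psi>np that])
    then have "\<psi> t * exp (2 * c * ln t) \<le> M * exp (2 * c * ln t)" by simp
    moreover have "\<psi> t * exp (2 * c * ln t) = E t"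
      unfolding \<psi>_def by (simp add: mult.assoc exp_add[symmetric])
    moreover have "exp (2 * c * ln t) = t powr (2 * c)" using t0 by (simp add: powr_def)
    ultimately show ?thesis by simp
  qed
  have Mpos: "M > 0"
  proof -
    have "E a > 0" using PQpos[of a] c_pos a_ge unfolding E_def by (simp add: add_pos_nonneg)
    then show ?thesis unfolding M_def \<psi>_def by simp
  qed
  show ?thesis
  proof (intro exI[of _ "M / \<bar>W a\<bar>"] conjI allI impI)
    show "M / \<bar>W a\<bar> > 0" using Mpos Wa by simp
    fix t assume t: "t \<ge> a"
    have Pp: "P t > 0" and Qp: "Q t > 0" using PQpos[OF t] by auto
    have cm: "cmod ((complex_of_real (y1' t) + \<i> * complex_of_real (y2' t))
                 / (complex_of_real (y1 t) + \<i> * complex_of_real (y2 t))) = sqrt (Q t) / sqrt (P t)"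
      by (simp add: Complex_eq[symmetric] norm_divide complex_norm P_def Q_def)
    have Wle: "\<bar>W t\<bar> \<le> sqrt (P t) * sqrt (Q t)"
    proof -
      have "\<bar>W t\<bar> = sqrt ((W t)^2)" by simp
      also have "\<dots> \<le> sqrt (P t * Q t)" using lag[of t] by (intro real_sqrt_le_mono) simp
      finally show ?thesis by (simp add: real_sqrt_mult)
    qed
    have "sqrt (Q t) / sqrt (P t) = Q t / (sqrt (P t) * sqrt (Q t))"
      using Pp Qp by (simp add: field_simps)
    also have "\<dots> \<le> Q t / \<bar>W t\<bar>"
      using Wle Qp Wt[OF t] by (intro frac_le) auto
    also have "\<dots> \<le> E t / \<bar>W a\<bar>"
    proof -
      have "c * P t / t^2 \<ge> 0" using c_pos Pp by simp
      then have "Q t \<le> E t" unfolding E_def by simp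
      then show ?thesis using Wc[OF t] divide_right_mono[of "Q t" "E t" "\<bar>W a\<bar>"] by simp
    qed
    also have "\<dots> \<le> M * t powr (2 * c) / \<bar>W a\<bar>"
      using Ebound[OF t] by (intro divide_right_mono) auto
    finally show "cmod ((complex_of_real (y1' t) + \<i> * complex_of_real (y2' t))
                 / (complex_of_real (y1 t) + \<i> * complex_of_real (y2 t))) \<le> M / \<bar>W a\<bar> * t powr (2 * c)"
      using cm by simp
  qed
qed
end
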